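(* Let $s$ be an integer with $\gcd(s,n)=1$ and let $\mathcal C\subseteq\mathcal L_{n,q}$ be an $\mathbb F_{q^n}$-linear MRD code of dimension $k$ containing the code $\mathcal G=\langle p(x),p(x)^{[s]},\ldots,p(x)^{[s(k-2)]}\rangle_{\mathbb F_{q^n}}$ (equivalent to $\mathcal G_{k-1,s}$), where $p(x)$ is an invertible linearized polynomial. Suppose there is $g(x)\in\mathcal C\setminus\mathcal G$ with $g(x)\in\langle p(x)^{[-s]},p(x)^{[s(k-1)]}\rangle_{\mathbb F_{q^n}}$ of the form $g(x)=p(x)^{[-s]}+\eta\,p(x)^{[s(k-1)]}$, where $\eta\in\mathbb F_{q^n}$ and $\mathrm N_{q^n/q}(\eta)\neq(-1)^{kn}$. Then $\mathcal C$ is equivalent to $\mathcal H_{k,s}(\eta^{[s]})$.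
   Context: $q$ is a prime power, $[i]:=q^i$ (exponents of $[\,\cdot\,]$ read modulo $n$, so $[-s]=[n-s]$). $\mathcal L_{n,q}$ is the $\mathbb F_{q^n}$-vector space of linearized polynomials $f(x)=\sum_{i=0}^{n-1}a_ix^{[i]}$, $a_i\in\mathbb F_{q^n}$, identified with $\mathbb F_q$-linear maps of $\mathbb F_{q^n}$. For $f(x)=\sum_i a_ix^{[i]}$, $f(x)^{[j]}:=x^{[j]}\circ f(x)=\sum_i a_i^{[j]}x^{[(i+j)\bmod n]}$. A code $\mathcal C\subseteq\mathcal L_{n,q}$ (an $\mathbb F_q$-subspace with rank distance $\mathrm{rk}(f-g)$ and minimum distance $d$) is MRD if $|\mathcal C|=q^{n(n-d+1)}$. $\mathrm N_{q^n/q}(\eta)=\prod_{i=0}^{n-1}\eta^{[i]}$. $\mathcal G_{k,s}=\langle x,\ldots,x^{[s(k-1)]}\rangle_{\mathbb F_{q^n}}$ and $\mathcal H_{k,s}(\eta)=\langle x+\eta x^{[sk]},x^{[s]},\ldots,x^{[s(k-1)]}\rangle_{\mathbb F_{q^n}}$. Codes $\mathcal C,\mathcal C'$ are equivalent if there are invertible $h,g\in\mathcal L_{n,q}$ and a field automorphism $\sigma$ (acting on coefficients) with $\{h\circ f^\sigma\circ g\colon f\in\mathcal C\}=\mathcal C'$. *)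

theory Defs
  imports Complex_Main "HOL-Library.Function_Algebras" "HOL-Computational_Algebra.Primes"
begin

text \<open>Linearized polynomials over F_{q^n} (the finite field type 'a, CARD('a) = q^n) are
  represented by their coefficient vectors a :: nat \<Rightarrow> 'a with a i = 0 for i \<ge> n,
  standing for f(x) = sum_{i<n} a_i x^{q^i}.\<close>

definition prime_power :: "nat \<Rightarrow> bool" where
  "prime_power q \<longleftrightarrow> (\<exists>p m. prime p \<and> m > 0 \<and> q = p ^ m)"

definition lin_space :: "nat \<Rightarrow> (nat \<Rightarrow> 'a::zero) set" where
  "lin_space n = {a. \<forall>i\<ge>n. a i = 0}"

definition lin_eval :: "nat \<Rightarrow> nat \<Rightarrow> (nat \<Rightarrow> 'a::field) \<Rightarrow> 'a \<Rightarrow> 'a" where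
  "lin_eval q n a x = (\<Sum>i<n. a i * x ^ (q ^ i))"

definition cscale :: "'a::field \<Rightarrow> (nat \<Rightarrow> 'a) \<Rightarrow> (nat \<Rightarrow> 'a)" where
  "cscale c a = (\<lambda>i. c * a i)"

definition mono :: "nat \<Rightarrow> int \<Rightarrow> nat \<Rightarrow> 'a::{zero,one}" where
  "mono n j = (\<lambda>i. if i < n \<and> int i = j mod int n then 1 else 0)"

text \<open>f^{[j]} = x^{[j]} \<circ> f: coefficient at m is a_{m-j}^{[j]} (indices mod n).\<close>
definition frob :: "nat \<Rightarrow> nat \<Rightarrow> int \<Rightarrow> (nat \<Rightarrow> 'a::field) \<Rightarrow> (nat \<Rightarrow> 'a)" where
  "frob q n j a = (\<lambda>i. if i < n then (a (nat ((int i - j) mod int n))) ^ (q ^ nat (j mod int n)) else 0)"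

definition frob_el :: "nat \<Rightarrow> nat \<Rightarrow> int \<Rightarrow> 'a::field \<Rightarrow> 'a" where
  "frob_el q n j c = c ^ (q ^ nat (j mod int n))"

definition norm_qn :: "nat \<Rightarrow> nat \<Rightarrow> 'a::field \<Rightarrow> 'a" where
  "norm_qn q n c = (\<Prod>i<n. c ^ (q ^ i))"

text \<open>Rank of f: the F_q-dimension r of its image, i.e. |im f| = q^r.\<close>
definition rk :: "nat \<Rightarrow> nat \<Rightarrow> (nat \<Rightarrow> 'a::{field,finite}) \<Rightarrow> nat" where
  "rk q n a = (THE r. card (range (lin_eval q n a)) = q ^ r)"

definition min_dist :: "nat \<Rightarrow> nat \<Rightarrow> (nat \<Rightarrow> 'a::{field,finite}) set \<Rightarrow> nat" where
  "min_dist q n C = Min {rk q n (f - g) | f g. f \<in> C \<and> g \<in> C \<and> f \<noteq> g}"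

definition is_MRD :: "nat \<Rightarrow> nat \<Rightarrow> (nat \<Rightarrow> 'a::{field,finite}) set \<Rightarrow> bool" where
  "is_MRD q n C \<longleftrightarrow> card C = q ^ (n * (n - min_dist q n C + 1))"

definition field_aut :: "('a::field \<Rightarrow> 'a) \<Rightarrow> bool" where
  "field_aut \<sigma> \<longleftrightarrow> bij \<sigma> \<and> (\<forall>x y. \<sigma> (x + y) = \<sigma> x + \<sigma> y) \<and> (\<forall>x y. \<sigma> (x * y) = \<sigma> x * \<sigma> y)"

definition invertible_lin :: "nat \<Rightarrow> nat \<Rightarrow> (nat \<Rightarrow> 'a::field) \<Rightarrow> bool" where
  "invertible_lin q n a \<longleftrightarrow> a \<in> lin_space n \<and> bij (lin_eval q n a)"

definition code_equiv :: "nat \<Rightarrow> nat \<Rightarrow> (nat \<Rightarrow> 'a::field) set \<Rightarrow> (nat \<Rightarrow> 'a) set \<Rightarrow> bool" where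
  "code_equiv q n C C' \<longleftrightarrow> (\<exists>h g \<sigma>. invertible_lin q n h \<and> invertible_lin q n g \<and> field_aut \<sigma> \<and>
     (\<lambda>f. lin_eval q n h \<circ> lin_eval q n (\<sigma> \<circ> f) \<circ> lin_eval q n g) ` C = lin_eval q n ` C')"

definition H_code :: "nat \<Rightarrow> nat \<Rightarrow> nat \<Rightarrow> int \<Rightarrow> 'a::field \<Rightarrow> (nat \<Rightarrow> 'a) set" where
  "H_code q n k s \<eta> = module.span cscale
     (insert (mono n 0 + cscale \<eta> (mono n (s * int k))) {mono n (s * int i) | i. 1 \<le> i \<and> i \<le> k - 1})"

end

theory Submission imports Defs "HOL-Computational_Algebra.Polynomial"
begin

lemma sum_app: "(sum f A) x = (\<Sum>a\<in>A. f a x)"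
  by (induction A rule: infinite_finite_induct) auto

lemma vs_cscale: "vector_space (cscale :: 'b::field \<Rightarrow> (nat \<Rightarrow> 'b) \<Rightarrow> _)"
  by unfold_locales (auto simp: cscale_def fun_eq_iff algebra_simps)

lemma char_dvd_card: "CHAR('a::{field,finite}) dvd card (UNIV :: 'a set)"
proof -
  define c where "c = CHAR('a)"
  have cpos: "c > 0" unfolding c_def using finite_imp_CHAR_pos[where 'a='a] by simp
  define H where "H = range (of_nat :: nat \<Rightarrow> 'a)"
  have modc: "(of_nat m :: 'a) = of_nat (m mod c)" for m
  proof -
    have "(of_nat m :: 'a) = of_nat (c * (m div c) + m mod c)" by simp
    also have "\<dots> = of_nat (c * (m div c)) + of_nat (m mod c)" by (rule of_nat_add)
    also have "(of_nat (c * (m div c)) :: 'a) = 0" unfolding c_def by (simp add: of_nat_eq_0_iff_char_dvd)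
    finally show ?thesis by simp
  qed
  have H_eq: "H = of_nat ` {..<c}"
  proof
    show "H \<subseteq> of_nat ` {..<c}"
    proof
      fix z assume "z \<in> H"
      then obtain m where m: "z = of_nat m" unfolding H_def by auto
      show "z \<in> of_nat ` {..<c}" using modc[of m] cpos m by (auto intro!: image_eqI[where x="m mod c"])
    qed
  qed (auto simp: H_def)
  have inj: "inj_on (of_nat :: nat \<Rightarrow> 'a) {..<c}"
  proof (rule inj_onI)
    fix i j assume ij: "i \<in> {..<c}" "j \<in> {..<c}" and eq: "(of_nat i :: 'a) = of_nat j"
    show "i = j"
    proof (rule ccontr)
      assume ne: "i \<noteq> j"
      have P: False if ab: "a < b" "b < c" "(of_nat a :: 'a) = of_nat b" for a b :: nat
      proof -
        from ab have "(of_nat (b - a) :: 'a) = 0" by (simp add: of_nat_diff)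
        hence "c dvd (b - a)" unfolding c_def by (simp add: of_nat_eq_0_iff_char_dvd)
        thus False using ab by (simp add: nat_dvd_not_less)
      qed
      show False
      proof (cases "i < j")
        case True thus False using P[of i j] ij eq by simp
      next
        case False hence "j < i" using ne by simp
        thus False using P[of j i] ij eq by simp
      qed
    qed
  qed
  have cardH: "card H = c" unfolding H_eq using inj by (simp add: card_image)
  have neg: "- (of_nat j :: 'a) \<in> H" for j
  proof -
    have cj: "(c - 1) * j + j = c * j" using cpos by (cases c) auto
    have "(of_nat ((c - 1) * j) :: 'a) + of_nat j = of_nat ((c - 1) * j + j)" by (rule of_nat_add[symmetric])
    also have "\<dots> = of_nat (c * j)" by (simp only: cj)
    also have "\<dots> = 0" unfolding c_def by (simp add: of_nat_eq_0_iff_char_dvd)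
    finally have "(of_nat ((c - 1) * j) :: 'a) = - of_nat j" by (simp add: eq_neg_iff_add_eq_0)
    hence "- (of_nat j :: 'a) = of_nat ((c - 1) * j)" by simp
    thus ?thesis unfolding H_def by (rule range_eqI)
  qed
  have addH: "a + b \<in> H" if aH: "a \<in> H" and bH: "b \<in> H" for a b
  proof -
    obtain i where i: "a = of_nat i" by (rule rangeE[OF aH[unfolded H_def]])
    obtain j where j: "b = of_nat j" by (rule rangeE[OF bH[unfolded H_def]])
    show ?thesis unfolding i j H_def of_nat_add[symmetric] by (rule rangeI)
  qed
  define CC where "CC = range (\<lambda>x. (\<lambda>h. x + h) ` H)"
  have "c dvd card (\<Union>CC)"
  proof (rule dvd_partition)
    show "finite (\<Union>CC)" by simp
    show "\<forall>C\<in>CC. c dvd card C" unfolding CC_def using cardH by (auto simp: card_image)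
    show "\<forall>c1\<in>CC. \<forall>c2\<in>CC. c1 \<noteq> c2 \<longrightarrow> c1 \<inter> c2 = {}"
    proof (intro ballI impI)
      fix c1 c2 assume "c1 \<in> CC" "c2 \<in> CC" and ne: "c1 \<noteq> c2"
      then obtain x y where c1: "c1 = (\<lambda>h. x + h) ` H" and c2: "c2 = (\<lambda>h. y + h) ` H" unfolding CC_def by auto
      show "c1 \<inter> c2 = {}"
      proof (rule ccontr)
        assume "c1 \<inter> c2 \<noteq> {}"
        then obtain a b where a: "a \<in> H" and b: "b \<in> H" and ab: "x + a = y + b" using c1 c2 by auto
        have d1: "x - y \<in> H"
        proof -
          obtain j where "a = of_nat j" by (rule rangeE[OF a[unfolded H_def]])
          hence "- a \<in> H" using neg by simp
          moreover have "x - y = b + - a" using ab by (simp add: algebra_simps)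
          ultimately show ?thesis using addH[OF b \<open>- a \<in> H\<close>] by simp
        qed
        have d2: "y - x \<in> H"
        proof -
          obtain j where jeq: "x - y = of_nat j" by (rule rangeE[OF d1[unfolded H_def]])
          have "y - x = - (x - y)" by simp
          also have "\<dots> = - of_nat j" using jeq by simp
          finally have "y - x = - of_nat j" .
          thus ?thesis using neg[of j] by simp
        qed
        have "c1 \<subseteq> c2" unfolding c1 c2
        proof
          fix z assume "z \<in> (\<lambda>h. x + h) ` H"
          then obtain h where h: "h \<in> H" "z = x + h" by auto
          have "z = y + ((x - y) + h)" using h by simp
          thus "z \<in> (\<lambda>h. y + h) ` H" using addH[OF d1 h(1)] by blast
        qed
        moreover have "c2 \<subseteq> c1" unfolding c1 c2
        proof
          fix z assume "z \<in> (\<lambda>h. y + h) ` H"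
          then obtain h where h: "h \<in> H" "z = y + h" by auto
          have "z = x + ((y - x) + h)" using h by simp
          thus "z \<in> (\<lambda>h. x + h) ` H" using addH[OF d2 h(1)] by blast
        qed
        ultimately show False using ne by blast
      qed
    qed
  qed
  moreover have "\<Union>CC = UNIV"
  proof -
    have "x \<in> (\<lambda>h. x + h) ` H" for x :: 'a unfolding H_def by (rule image_eqI[where x=0]) (auto intro!: range_eqI[where x="0::nat"])
    thus ?thesis unfolding CC_def by blast
  qed
  ultimately show ?thesis unfolding c_def by simp
qed

context module begin
lemma span_idx:
  assumes "finite I"
  shows "local.span (u ` I) = range (\<lambda>c. \<Sum>i\<in>I. scale (c i) (u i))"
proof
  show "range (\<lambda>c. \<Sum>i\<in>I. scale (c i) (u i)) \<subseteq> local.span (u ` I)"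
  proof
    fix y assume "y \<in> range (\<lambda>c. \<Sum>i\<in>I. scale (c i) (u i))"
    then obtain c where y: "y = (\<Sum>i\<in>I. scale (c i) (u i))" by auto
    show "y \<in> local.span (u ` I)" unfolding y by (rule span_sum, rule span_scale, rule span_base) auto
  qed
  have sub: "local.subspace (range (\<lambda>c. \<Sum>i\<in>I. scale (c i) (u i)))"
    unfolding subspace_def
  proof (intro conjI ballI allI)
    show "0 \<in> range (\<lambda>c. \<Sum>i\<in>I. scale (c i) (u i))" by (rule image_eqI[where x="\<lambda>_. 0"]) auto
  next
    fix x y assume "x \<in> range (\<lambda>c. \<Sum>i\<in>I. scale (c i) (u i))" "y \<in> range (\<lambda>c. \<Sum>i\<in>I. scale (c i) (u i))"
    then obtain c d where "x = (\<Sum>i\<in>I. scale (c i) (u i))" "y = (\<Sum>i\<in>I. scale (d i) (u i))" by auto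
    thus "x + y \<in> range (\<lambda>c. \<Sum>i\<in>I. scale (c i) (u i))"
      by (intro image_eqI[where x="\<lambda>i. c i + d i"]) (auto simp: sum.distrib scale_left_distrib)
  next
    fix a x assume "x \<in> range (\<lambda>c. \<Sum>i\<in>I. scale (c i) (u i))"
    then obtain c where "x = (\<Sum>i\<in>I. scale (c i) (u i))" by auto
    thus "scale a x \<in> range (\<lambda>c. \<Sum>i\<in>I. scale (c i) (u i))"
      by (intro image_eqI[where x="\<lambda>i. a * c i"]) (auto simp: scale_sum_right)
  qed
  have "u ` I \<subseteq> range (\<lambda>c. \<Sum>i\<in>I. scale (c i) (u i))"
  proof
    fix y assume "y \<in> u ` I"
    then obtain j where j: "j \<in> I" "y = u j" by auto
    have "(\<Sum>i\<in>I. scale (if i = j then 1 else 0) (u i)) = (\<Sum>i\<in>I. if i = j then u i else 0)"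
      by (intro sum.cong) auto
    also have "\<dots> = u j" using j assms by (simp add: sum.delta)
    finally show "y \<in> range (\<lambda>c. \<Sum>i\<in>I. scale (c i) (u i))" using j by (intro image_eqI[where x="\<lambda>i. if i = j then 1 else 0"]) auto
  qed
  thus "local.span (u ` I) \<subseteq> range (\<lambda>c. \<Sum>i\<in>I. scale (c i) (u i))" using sub by (rule span_minimal)
qed

end

locale lsetup =
  fixes q n :: nat and ty :: "'a::{field,finite} itself"
  assumes qpp: "prime_power q" and npos: "n \<ge> 1" and card: "card (UNIV :: 'a set) = q ^ n"
begin

lemma q_char: "\<exists>m. q = CHAR('a) ^ m"
proof -
  obtain P m where P: "prime P" "m > 0" "q = P ^ m" using qpp unfolding prime_power_def by blast
  have "prime CHAR('a)" using prime_CHAR_semidom finite_imp_CHAR_pos[where 'a='a] by auto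
  moreover have "CHAR('a) dvd P ^ (m * n)" using char_dvd_card[where 'a='a] card P by (simp add: power_mult)
  ultimately have "CHAR('a) dvd P" using prime_dvd_power by blast
  hence "CHAR('a) = P" using primes_dvd_imp_eq \<open>prime CHAR('a)\<close> P by blast
  thus ?thesis using P by blast
qed

lemma prime_char: "prime CHAR('a)"
  using prime_CHAR_semidom finite_imp_CHAR_pos[where 'a='a] by auto

lemma q_ge2: "q \<ge> 2"
proof -
  obtain P m where P: "prime P" "m > 0" "q = P ^ m" using qpp unfolding prime_power_def by blast
  have "P \<ge> 2" using P prime_ge_2_nat by blast
  hence "P ^ m \<ge> P ^ 1" using P by (intro power_increasing) auto
  thus ?thesis using P \<open>P \<ge> 2\<close> by simp
qed

lemma frob_add: "(x + y :: 'a) ^ (q ^ i) = x ^ (q ^ i) + y ^ (q ^ i)"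
proof -
  obtain m where m: "q = CHAR('a) ^ m" using q_char by blast
  show ?thesis by (rule freshmans_dream'[OF prime_char, where n="m*i"]) (simp add: m power_mult)
qed

lemma frob_sum: "(sum f A :: 'a) ^ (q ^ i) = (\<Sum>j\<in>A. f j ^ (q ^ i))"
proof -
  obtain m where m: "q = CHAR('a) ^ m" using q_char by blast
  show ?thesis by (rule freshmans_dream_sum'[OF prime_char, where n="m*i"]) (simp add: m power_mult)
qed

lemma pow_card: "(x :: 'a) ^ card (UNIV :: 'a set) = x"
proof (cases "x = 0")
  case False
  have "x * (\<Prod>y\<in>UNIV-{0}. x * y) = x * x ^ (card (UNIV :: 'a set) - 1) * \<Prod>(UNIV-{0})"
    by (simp add: prod.distrib mult_ac)
  also have "x * x ^ (card (UNIV :: 'a set) - 1) = x ^ Suc (card (UNIV :: 'a set) - 1)"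
    by (subst power_Suc) auto
  also have "Suc (card (UNIV :: 'a set) - 1) = card (UNIV :: 'a set)"
    using finite_UNIV_card_ge_0[where ?'a = 'a] by simp
  also have "(\<Prod>y\<in>UNIV-{0}. x * y) = (\<Prod>y\<in>UNIV-{0}. y)"
    by (rule prod.reindex_bij_witness[of _ "\<lambda>y. y / x" "\<lambda>y. x * y"]) (use False in auto)
  finally show ?thesis
    by simp
qed (use finite_UNIV_card_ge_0[where ?'a = 'a] in auto)

lemma pow_qn_mult: "(x :: 'a) ^ (q ^ (n * d)) = x"
proof (induction d)
  case (Suc d)
  have "x ^ (q ^ (n * Suc d)) = (x ^ (q ^ (n * d))) ^ (q ^ n)"
    by (simp add: power_add power_mult mult.commute power_mult_distrib flip: power_mult)
  also have "\<dots> = x" using Suc pow_card card by simp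
  finally show ?case .
qed simp

lemma pow_mod: "(x :: 'a) ^ (q ^ j) = x ^ (q ^ (j mod n))"
proof -
  have "q ^ j = q ^ (n * (j div n)) * q ^ (j mod n)"
    by (simp add: power_add[symmetric])
  hence "x ^ (q ^ j) = (x ^ (q ^ (n * (j div n)))) ^ (q ^ (j mod n))"
    by (simp add: power_mult)
  thus ?thesis using pow_qn_mult by simp
qed

abbreviation Fr :: "int \<Rightarrow> 'a \<Rightarrow> 'a" where "Fr \<equiv> frob_el q n"

lemma Fr_comp: "Fr j (Fr l x) = Fr (j + l) x"
proof -
  have np: "int n > 0" using npos by simp
  have "Fr j (Fr l x) = x ^ (q ^ (nat (l mod int n) + nat (j mod int n)))"
    unfolding frob_el_def by (simp add: power_mult power_add)
  also have "\<dots> = x ^ (q ^ ((nat (l mod int n) + nat (j mod int n)) mod n))"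
    by (rule pow_mod)
  also have "(nat (l mod int n) + nat (j mod int n)) mod n = nat ((j + l) mod int n)"
  proof -
    have "int ((nat (l mod int n) + nat (j mod int n)) mod n) = (l mod int n + j mod int n) mod int n"
      using np by (simp add: zmod_int)
    also have "\<dots> = (j + l) mod int n" by (simp add: mod_add_eq add.commute)
    finally show ?thesis by simp
  qed
  finally show ?thesis unfolding frob_el_def .
qed

lemma Fr_0: "Fr 0 x = x" unfolding frob_el_def by simp

lemma Fr_add: "Fr j (x + y) = Fr j x + Fr j y" unfolding frob_el_def by (rule frob_add)
lemma Fr_mult: "Fr j (x * y) = Fr j x * Fr j y" unfolding frob_el_def by (simp add: power_mult_distrib)
lemma Fr_sum: "Fr j (sum f A) = (\<Sum>i\<in>A. Fr j (f i))" unfolding frob_el_def by (rule frob_sum)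
lemma Fr_zero: "Fr j 0 = 0" unfolding frob_el_def using q_ge2 by simp
lemma Fr_one: "Fr j 1 = 1" unfolding frob_el_def by simp
lemma Fr_inv: "Fr j (Fr (- j) x) = x" by (simp add: Fr_comp Fr_0)
lemma Fr_bij: "bij (Fr j)"
proof (rule bijI)
  have l: "Fr (-j) (Fr j x) = x" for x using Fr_inv[of "-j" x] by simp
  show "inj (Fr j)"
  proof (rule injI)
    fix x y assume "Fr j x = Fr j y"
    hence "Fr (-j) (Fr j x) = Fr (-j) (Fr j y)" by simp
    thus "x = y" using l by simp
  qed
  show "surj (Fr j)" by (rule surjI[of _ "Fr (-j)"]) (rule Fr_inv)
qed

abbreviation E :: "(nat \<Rightarrow> 'a) \<Rightarrow> 'a \<Rightarrow> 'a" where "E \<equiv> lin_eval q n"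

lemma E_add: "E (a + b) x = E a x + E b x"
  unfolding lin_eval_def by (simp add: sum.distrib distrib_right)

lemma E_diff: "E (a - b) x = E a x - E b x"
  unfolding lin_eval_def by (simp add: sum_subtractf left_diff_distrib)

lemma E_scale: "E (cscale c a) x = c * E a x"
  unfolding lin_eval_def cscale_def by (simp add: sum_distrib_left mult.assoc)

lemma E_zero: "E 0 x = 0"
  unfolding lin_eval_def by simp

lemma E_zero': "E (\<lambda>_. 0) x = 0"
  unfolding lin_eval_def by simp

lemma E_sum: "E (\<Sum>i\<in>I. f i) x = (\<Sum>i\<in>I. E (f i) x)"
proof (induction I rule: infinite_finite_induct)
  case (insert i I) thus ?case by (simp only: sum.insert[OF insert(1,2)] E_add insert(3))
qed (simp_all add: E_zero')

lemma E_mono: "E (Defs.mono n e) x = Fr e x"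
proof -
  have np: "int n > 0" using npos by simp
  define e' where "e' = nat (e mod int n)"
  have e': "e' < n" "int e' = e mod int n" using np by (auto simp: e'_def nat_less_iff)
  have "E (Defs.mono n e) x = (\<Sum>i<n. (if i = e' then x ^ (q ^ i) else 0))"
    unfolding lin_eval_def Defs.mono_def using e' by (intro sum.cong) auto
  also have "\<dots> = x ^ (q ^ e')" using e' by (simp add: sum.delta)
  finally show ?thesis unfolding frob_el_def e'_def .
qed

lemma E_frob:
  assumes a: "a \<in> lin_space n"
  shows "E (frob q n j a) x = Fr j (E a x)"
proof -
  have np: "int n > 0" using npos by simp
  define j' where "j' = nat (j mod int n)"
  define \<tau> where "\<tau> i = nat ((int i - j) mod int n)" for i
  have tau_lt: "\<tau> i < n" for i using np by (simp add: \<tau>_def nat_less_iff)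
  have tau_inv: "(\<tau> i + j') mod n = i" if i: "i < n" for i
  proof -
    have "int ((\<tau> i + j') mod n) = ((int i - j) mod int n + j mod int n) mod int n"
      using np by (simp add: \<tau>_def j'_def zmod_int)
    also have "\<dots> = (int i - j + j) mod int n" by (simp add: mod_add_eq)
    also have "\<dots> = int i" using i by simp
    finally show ?thesis by linarith
  qed
  have inj: "inj_on \<tau> {..<n}" by (metis inj_onI lessThan_iff tau_inv)
  have img: "\<tau> ` {..<n} = {..<n}" by (rule endo_inj_surj[OF _ _ inj]) (auto simp: tau_lt)
  define \<phi> where "\<phi> m = a m ^ (q ^ j') * x ^ (q ^ ((m + j') mod n))" for m
  have "Fr j (E a x) = (\<Sum>m<n. \<phi> m)"
    unfolding lin_eval_def frob_el_def j'_def[symmetric] \<phi>_def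
    by (simp add: frob_sum power_mult_distrib pow_mod[of x "_ + j'"] flip: power_mult power_add)
  also have "\<dots> = sum \<phi> (\<tau> ` {..<n})" by (simp add: img)
  also have "\<dots> = (\<Sum>i<n. \<phi> (\<tau> i))" by (simp add: sum.reindex[OF inj])
  also have "\<dots> = E (frob q n j a) x"
  proof -
    have "\<phi> (\<tau> i) = frob q n j a i * x ^ (q ^ i)" if "i < n" for i
    proof -
      have "\<phi> (\<tau> i) = a (\<tau> i) ^ (q ^ j') * x ^ (q ^ i)" unfolding \<phi>_def using tau_inv[OF that] by simp
      thus ?thesis using that by (simp add: frob_def \<tau>_def j'_def)
    qed
    thus ?thesis unfolding lin_eval_def by (intro sum.cong refl) auto
  qed
  finally show ?thesis by simp
qed


lemma ls_frob: "frob q n j a \<in> lin_space n" unfolding lin_space_def frob_def by simp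
lemma ls_mono: "Defs.mono n j \<in> lin_space n" unfolding lin_space_def Defs.mono_def by simp
lemma ls_scale: "(a :: nat \<Rightarrow> 'a)  \<in> lin_space n \<Longrightarrow> cscale c a \<in> lin_space n" unfolding lin_space_def cscale_def by simp
lemma ls_add: "(a :: nat \<Rightarrow> 'a)  \<in> lin_space n \<Longrightarrow> b \<in> lin_space n \<Longrightarrow> a + b \<in> lin_space n" unfolding lin_space_def by simp
lemma ls_diff: "(a :: nat \<Rightarrow> 'a)  \<in> lin_space n \<Longrightarrow> b \<in> lin_space n \<Longrightarrow> a - b \<in> lin_space n" unfolding lin_space_def by simp
lemma ls_zero: "0 \<in> lin_space n" unfolding lin_space_def by simp
lemma ls_sum: "(\<And>i. i \<in> I \<Longrightarrow> (f i :: nat \<Rightarrow> 'a) \<in> lin_space n) \<Longrightarrow> sum f I \<in> lin_space n"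
proof (induction I rule: infinite_finite_induct)
  case (insert i I) thus ?case by (simp only: sum.insert[OF insert(1,2)]) (intro ls_add; simp)
qed (simp_all add: ls_zero)

lemma finite_ls: "finite (lin_space n :: (nat \<Rightarrow> 'a) set)"
proof -
  have "finite {f :: nat \<Rightarrow> 'a. \<forall>x. (x \<in> {..<n} \<longrightarrow> f x \<in> UNIV) \<and> (x \<notin> {..<n} \<longrightarrow> f x = 0)}"
    by (rule finite_set_of_finite_funs) auto
  moreover have "lin_space n \<subseteq> {f :: nat \<Rightarrow> 'a. \<forall>x. (x \<in> {..<n} \<longrightarrow> f x \<in> UNIV) \<and> (x \<notin> {..<n} \<longrightarrow> f x = 0)}"
    unfolding lin_space_def by auto
  ultimately show ?thesis by (rule finite_subset[rotated])
qed

lemma E_inj0: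
  assumes a: "a \<in> lin_space n" and z: "\<And>x. E a x = 0"
  shows "a = 0"
proof -
  define P where "P = (\<Sum>i<n. monom (a i) (q ^ i))"
  have q1: "q > 1" using q_ge2 by simp
  have ev: "poly P x = E a x" for x unfolding P_def lin_eval_def by (simp add: poly_sum poly_monom)
  have P0: "P = 0"
  proof (rule ccontr)
    assume "P \<noteq> 0"
    hence "card {x. poly P x = 0} \<le> degree P" by (rule card_poly_roots_bound)
    also have "degree P \<le> q ^ (n - 1)" unfolding P_def using q1
      by (intro degree_sum_le) (auto intro!: order.trans[OF degree_monom_le] power_increasing simp: Suc_le_eq)
    also have "\<dots> < q ^ n" using q1 npos by (intro power_strict_increasing) auto
    finally have "card (UNIV :: 'a set) < q ^ n" using ev z by simp
    thus False using card by simp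
  qed
  show ?thesis
  proof
    fix j show "a j = 0 j"
    proof (cases "j < n")
      case True
      have "coeff P (q ^ j) = (\<Sum>i<n. if q ^ i = q ^ j then a i else 0)" unfolding P_def by (simp add: coeff_sum)
      also have "\<dots> = (\<Sum>i<n. if i = j then a i else 0)" using q1 by (intro sum.cong refl) (simp add: power_inject_exp)
      also have "\<dots> = a j" using True by simp
      finally show ?thesis using P0 by simp
    next
      case False thus ?thesis using a unfolding lin_space_def by simp
    qed
  qed
qed

lemma E_inj:
  assumes "a \<in> lin_space n" "b \<in> lin_space n" "\<And>x. E a x = E b x"
  shows "a = b"
  using E_inj0[of "a - b"] assms by (simp add: ls_diff E_diff)

lemma Fr_nat: "i < n \<Longrightarrow> Fr (int i) y = y ^ (q ^ i)"
  unfolding frob_el_def by simp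

lemma inverse_exists:
  assumes p: "invertible_lin q n p"
  shows "\<exists>b. invertible_lin q n b \<and> (\<forall>x. E p (E b x) = x)"
proof -
  have pl: "p \<in> lin_space n" and pb: "bij (E p)" using p unfolding invertible_lin_def by auto
  define \<Phi> where "\<Phi> a = (\<Sum>i<n. cscale (p i) (frob q n (int i) a))" for a
  have Phi_E: "E (\<Phi> a) x = E p (E a x)" if "a \<in> lin_space n" for a x
    unfolding \<Phi>_def using that by (simp add: E_sum E_scale E_frob Fr_nat lin_eval_def[of q n p])
  have Phi_ls: "\<Phi> a \<in> lin_space n" for a unfolding \<Phi>_def by (intro ls_sum ls_scale ls_frob)
  have inj: "inj_on \<Phi> (lin_space n)"
  proof (rule inj_onI)
    fix a a' assume a: "a \<in> lin_space n" and a': "a' \<in> lin_space n" and eq: "\<Phi> a = \<Phi> a'"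
    have "E p (E a x) = E p (E a' x)" for x using Phi_E[OF a] Phi_E[OF a'] eq by metis
    hence "E a x = E a' x" for x using pb by (meson bij_is_inj injD)
    thus "a = a'" using E_inj a a' by blast
  qed
  have "\<Phi> ` lin_space n = lin_space n" by (rule endo_inj_surj[OF finite_ls _ inj]) (auto simp: Phi_ls)
  then obtain b where b: "b \<in> lin_space n" "\<Phi> b = Defs.mono n 0" using ls_mono by (metis imageE)
  have inv: "E p (E b x) = x" for x using Phi_E[OF b(1), of x] b(2) E_mono[of 0 x] Fr_0 by simp
  have "inj (E b)" by (metis inv injI)
  hence "bij (E b)" using finite_UNIV_inj_surj[of "E b"] by (simp add: bij_def)
  thus ?thesis using inv b unfolding invertible_lin_def by blast
qed


lemma mono_at: "Defs.mono n a (nat (b mod int n)) = (if a mod int n = b mod int n then 1 else 0)"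
  using npos by (simp add: Defs.mono_def nat_less_iff)

lemma e_inj:
  assumes s: "gcd s (int n) = 1" and ij: "i < n" "j < n" and eq: "(s * int i) mod int n = (s * int j) mod int n"
  shows "i = j"
proof -
  have "int n dvd s * int i - s * int j" using eq by (simp add: mod_eq_dvd_iff)
  hence "int n dvd (int i - int j) * s" by (simp add: algebra_simps)
  moreover have "coprime (int n) s" using s by (simp add: coprime_iff_gcd_eq_1 gcd.commute)
  ultimately have d: "int n dvd int i - int j" using coprime_dvd_mult_left_iff by blast
  show ?thesis
  proof (rule ccontr)
    assume "i \<noteq> j"
    hence "\<bar>int n\<bar> \<le> \<bar>int i - int j\<bar>" using dvd_imp_le_int[OF _ d] by simp
    thus False using ij by simp
  qed
qed

lemma indep_frobs:
  fixes p :: "nat \<Rightarrow> 'a"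
  assumes p: "invertible_lin q n p" and s: "gcd s (int n) = 1" and K: "K \<le> n"
    and z: "(\<Sum>i<K. cscale (c i) (frob q n (s * int i) p)) = 0"
  shows "\<forall>i<K. c i = 0"
proof -
  have pl: "p \<in> lin_space n" and pb: "bij (E p)" using p unfolding invertible_lin_def by auto
  define w where "w = (\<Sum>i<K. cscale (c i) (Defs.mono n (s * int i)))"
  have "E w y = 0" for y
  proof -
    obtain x where x: "y = E p x" using pb by (metis bij_pointE)
    have "0 = E (\<Sum>i<K. cscale (c i) (frob q n (s * int i) p)) x" using z by (simp add: E_zero)
    also have "\<dots> = E w y" unfolding w_def x using pl by (simp add: E_sum E_scale E_frob E_mono)
    finally show ?thesis by simp
  qed
  hence w0: "w = 0" using E_inj0[of w] unfolding w_def by (simp add: ls_sum ls_scale ls_mono)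
  show ?thesis
  proof (intro allI impI)
    fix j assume j: "j < K"
    have "w (nat ((s * int j) mod int n)) = (\<Sum>i<K. c i * (if (s * int i) mod int n = (s * int j) mod int n then 1 else 0))"
      unfolding w_def by (simp add: cscale_def mono_at sum_app)
    also have "\<dots> = (\<Sum>i<K. if i = j then c i else 0)"
      using e_inj[OF s] j K by (intro sum.cong refl) auto
    also have "\<dots> = c j" using j by simp
    finally show "c j = 0" using w0 by simp
  qed
qed

lemma frobs_inj:
  fixes p :: "nat \<Rightarrow> 'a"
  assumes p: "invertible_lin q n p" and s: "gcd s (int n) = 1" and ij: "i < n" "j < n"
    and eq: "frob q n (s * int i) p = frob q n (s * int j) p"
  shows "i = j"
proof -
  have pl: "p \<in> lin_space n" and pb: "bij (E p)" using p unfolding invertible_lin_def by auto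
  have Ey: "E (Defs.mono n (s * int i)) y = E (Defs.mono n (s * int j)) y" for y
  proof -
    obtain x where x: "y = E p x" using pb by (metis bij_pointE)
    show ?thesis using arg_cong[OF eq, of "\<lambda>a. E a x"] pl by (simp add: E_frob E_mono x)
  qed
  have "(Defs.mono n (s * int i) :: nat \<Rightarrow> 'a) = Defs.mono n (s * int j)" by (rule E_inj) (rule ls_mono, rule ls_mono, rule Ey)
  hence "(Defs.mono n (s * int i) (nat ((s * int i) mod int n)) :: 'a) = Defs.mono n (s * int j) (nat ((s * int i) mod int n))" by simp
  hence "(s * int i) mod int n = (s * int j) mod int n" by (simp add: mono_at split: if_splits)
  thus ?thesis using e_inj[OF s ij] by simp
qed

lemma ls_span_monos: "lin_space n \<subseteq> module.span cscale ((\<lambda>i. Defs.mono n (int i) :: nat \<Rightarrow> 'a) ` {..<n})"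
proof
  interpret cs: vector_space "cscale :: 'a \<Rightarrow> _" by (rule vs_cscale)
  fix a :: "nat \<Rightarrow> 'a" assume a: "a \<in> lin_space n"
  have "a = (\<Sum>i<n. cscale (a i) (Defs.mono n (int i)))"
  proof
    fix j
    have "(\<Sum>i<n. cscale (a i) (Defs.mono n (int i))) j = (\<Sum>i<n. if i = j \<and> j < n then a i else 0)"
      by (simp add: cscale_def Defs.mono_def sum_app) (intro sum.cong; auto)
    also have "\<dots> = a j" using a unfolding lin_space_def by (cases "j < n") auto
    finally show "a j = (\<Sum>i<n. cscale (a i) (Defs.mono n (int i))) j" by simp
  qed
  also have "\<dots> \<in> cs.span ((\<lambda>i. Defs.mono n (int i)) ` {..<n})"
    by (intro cs.span_sum cs.span_scale cs.span_base) auto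
  finally show "a \<in> cs.span ((\<lambda>i. Defs.mono n (int i)) ` {..<n})" .
qed

end

theorem lemma3p8:
  fixes q n k :: nat and s :: int and C :: "(nat \<Rightarrow> 'a::{field,finite}) set"
    and p g :: "nat \<Rightarrow> 'a" and \<eta> :: 'a
  assumes q: "prime_power q" and n: "n \<ge> 1" and card: "card (UNIV :: 'a set) = q ^ n"
    and s: "gcd s (int n) = 1"
    and C_sub: "C \<subseteq> lin_space n"
    and C_lin: "module.subspace cscale C"
    and C_dim: "vector_space.dim cscale C = k"
    and C_MRD: "is_MRD q n C"
    and p: "invertible_lin q n p"
    and G_sub: "module.span cscale {frob q n (s * int i) p | i. i + 2 \<le> k} \<subseteq> C"
    and gC: "g \<in> C"
    and gG: "g \<notin> module.span cscale {frob q n (s * int i) p | i. i + 2 \<le> k}"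
    and g_form: "g = frob q n (- s) p + cscale \<eta> (frob q n (s * (int k - 1)) p)"
    and norm: "norm_qn q n \<eta> \<noteq> (-1) ^ (k * n)"
  shows "code_equiv q n C (H_code q n k s (frob_el q n s \<eta>))"
proof -
  interpret cs: vector_space "cscale :: 'a \<Rightarrow> _" by (rule vs_cscale)
  interpret L: lsetup q n "TYPE('a)" using q n card by unfold_locales
  let ?E = "lin_eval q n"
  let ?Fr = "frob_el q n"
  have pl: "p \<in> lin_space n" using p unfolding invertible_lin_def by auto
  obtain b where b: "invertible_lin q n b" and bE: "\<And>x. ?E p (?E b x) = x"
    using L.inverse_exists[OF p] by blast
  define v where "v i = frob q n (s * int i) p" for i
  define I where "I = {..<k - 1}"
  have Gset: "{frob q n (s * int i) p | i. i + 2 \<le> k} = v ` I"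
    unfolding v_def I_def by (auto; force)
  obtain B where B: "B \<subseteq> C" "cs.independent B" "C \<subseteq> cs.span B" "card B = k"
    using cs.basis_exists[of C] C_dim by metis
  define M where "M = (\<lambda>i. Defs.mono n (int i) :: nat \<Rightarrow> 'a) ` {..<n}"
  have "B \<subseteq> cs.span M" using B(1) C_sub L.ls_span_monos unfolding M_def by blast
  hence Bfin: "finite B" and "card B \<le> card M"
    using cs.independent_span_bound[OF _ B(2)] unfolding M_def by auto
  moreover have "card M \<le> n" unfolding M_def using card_image_le[of "{..<n}"] by auto
  ultimately have kn: "k \<le> n" using B(4) by simp
  have vinj: "inj_on v I"
    using L.frobs_inj[OF p s] kn unfolding inj_on_def v_def I_def by fastforce
  have vind: "cs.independent (v ` I)"
  proof (rule cs.independent_if_scalars_zero)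
    show "finite (v ` I)" unfolding I_def by simp
    fix f x assume sum0: "(\<Sum>y\<in>v ` I. cscale (f y) y) = 0" and x: "x \<in> v ` I"
    have "(\<Sum>y\<in>v ` I. cscale (f y) y) = (\<Sum>i\<in>I. cscale (f (v i)) (v i))"
      by (simp add: sum.reindex[OF vinj])
    hence "(\<Sum>i<k - 1. cscale (f (v i)) (frob q n (s * int i) p)) = 0"
      using sum0 by (simp add: I_def v_def)
    hence "\<forall>i<k - 1. f (v i) = 0" by (rule L.indep_frobs[OF p s, rotated]) (use kn in simp)
    thus "f x = 0" using x unfolding I_def by auto
  qed
  have cardvI: "card (v ` I) = k - 1" using card_image[OF vinj] unfolding I_def by simp
  have gG': "g \<notin> cs.span (v ` I)" using gG Gset by simp
  define S where "S = insert g (v ` I)"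
  have Sind: "cs.independent S" unfolding S_def using cs.independent_insertI[OF gG' vind] .
  have gnot: "g \<notin> v ` I" using gG' cs.span_base by blast
  have cardS: "card S = k - 1 + 1" unfolding S_def using gnot cardvI I_def by simp
  have SC: "S \<subseteq> C" unfolding S_def using gC G_sub Gset cs.span_base by blast
  have "card S \<le> card B" using cs.independent_span_bound[OF Bfin Sind] SC B(3) by blast
  hence k1: "k \<ge> 1" using cardS B(4) by simp
  have CS: "C = cs.span S"
  proof
    show "cs.span S \<subseteq> C" using cs.span_minimal[OF SC C_lin] .
    show "C \<subseteq> cs.span S"
    proof
      fix x assume xC: "x \<in> C"
      show "x \<in> cs.span S"
      proof (rule ccontr)
        assume xn: "x \<notin> cs.span S"
        have ind: "cs.independent (insert x S)" using cs.independent_insertI[OF xn Sind] .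
        have "x \<notin> S" using xn cs.span_base by blast
        hence "card (insert x S) = k + 1" using cardS k1 cs.independent_span_bound[OF Bfin Sind] SC B(3)
          by (simp add: card_insert_if)
        moreover have "card (insert x S) \<le> card B"
          using cs.independent_span_bound[OF Bfin ind] SC B(3) xC by blast
        ultimately show False using B(4) by simp
      qed
    qed
  qed
  define \<eta>' where "\<eta>' = ?Fr s \<eta>"
  define u where "u i = (if i < k - 1 then v i else g)" for i
  define w where "w i = (if i < k - 1 then Defs.mono n (s * int (i + 1))
      else Defs.mono n 0 + cscale \<eta>' (Defs.mono n (s * int k)))" for i
  define K where "K = {..<k}"
  have SK: "S = u ` K"
  proof -
    have "K = insert (k - 1) I" unfolding K_def I_def using k1 by auto
    thus ?thesis unfolding S_def u_def by (auto simp: I_def)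
  qed
  have HK: "insert (Defs.mono n 0 + cscale \<eta>' (Defs.mono n (s * int k))) {Defs.mono n (s * int i) | i. 1 \<le> i \<and> i \<le> k - 1} = w ` K"
  proof -
    have "K = insert (k - 1) I" unfolding K_def I_def using k1 by auto
    moreover have "{Defs.mono n (s * int i) | i. 1 \<le> i \<and> i \<le> k - 1} = (\<lambda>i. Defs.mono n (s * int (i + 1)) :: nat \<Rightarrow> 'a) ` I"
      unfolding I_def
    proof (auto, goal_cases)
      case (1 i) thus ?case by (intro image_eqI[where x="i - 1"]) auto
    next
      case (2 x) thus ?case by (intro exI[where x="x + 1"]) (auto simp: add.commute)
    qed
    ultimately show ?thesis unfolding w_def by (auto simp: I_def)
  qed
  have key: "?Fr s (?E (u i) (?E b x)) = ?E (w i) x" if i: "i \<in> K" for i x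
  proof (cases "i < k - 1")
    case True
    have "?Fr s (?E (u i) (?E b x)) = ?Fr s (?Fr (s * int i) x)"
      using True by (simp add: u_def v_def L.E_frob[OF pl] bE)
    also have "\<dots> = ?Fr (s * int (i + 1)) x" by (simp add: L.Fr_comp algebra_simps)
    finally show ?thesis using True by (simp add: w_def L.E_mono)
  next
    case False
    have "?E (u i) (?E b x) = ?Fr (- s) x + \<eta> * ?Fr (s * (int k - 1)) x"
      using False by (simp add: u_def g_form L.E_add L.E_scale L.E_frob[OF pl] bE)
    hence "?Fr s (?E (u i) (?E b x)) = ?Fr (s + - s) x + \<eta>' * ?Fr (s + s * (int k - 1)) x"
      by (simp add: L.Fr_add L.Fr_mult L.Fr_comp \<eta>'_def)
    also have "\<dots> = x + \<eta>' * ?Fr (s * int k) x" by (simp add: L.Fr_0 algebra_simps)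
    finally show ?thesis using False by (simp add: w_def L.E_add L.E_scale L.E_mono L.Fr_0)
  qed
  define h where "h = (Defs.mono n s :: nat \<Rightarrow> 'a)"
  have hE: "?E h y = ?Fr s y" for y unfolding h_def by (rule L.E_mono)
  have h_inv: "invertible_lin q n h"
  proof -
    have "?E h = ?Fr s" using hE by auto
    thus ?thesis unfolding invertible_lin_def h_def using L.ls_mono L.Fr_bij by (simp add: h_def)
  qed
  have Tsum: "?E h \<circ> ?E (id \<circ> (\<Sum>i\<in>K. cscale (c i) (u i))) \<circ> ?E b
      = ?E (\<Sum>i\<in>K. cscale (?Fr s (c i)) (w i))" for c
  proof
    fix x
    have "(?E h \<circ> ?E (id \<circ> (\<Sum>i\<in>K. cscale (c i) (u i))) \<circ> ?E b) x
        = ?Fr s (\<Sum>i\<in>K. c i * ?E (u i) (?E b x))"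
      by (simp add: hE L.E_sum L.E_scale)
    also have "\<dots> = (\<Sum>i\<in>K. ?Fr s (c i) * ?E (w i) x)"
      by (simp add: L.Fr_sum L.Fr_mult key)
    also have "\<dots> = ?E (\<Sum>i\<in>K. cscale (?Fr s (c i)) (w i)) x"
      by (simp add: L.E_sum L.E_scale)
    finally show "(?E h \<circ> ?E (id \<circ> (\<Sum>i\<in>K. cscale (c i) (u i))) \<circ> ?E b) x = ?E (\<Sum>i\<in>K. cscale (?Fr s (c i)) (w i)) x" .
  qed
  have finK: "finite K" unfolding K_def by simp
  have Hspan: "H_code q n k s \<eta>' = range (\<lambda>d. \<Sum>i\<in>K. cscale (d i) (w i))"
    unfolding H_code_def HK using cs.span_idx[OF finK] by simp
  have Cspan: "C = range (\<lambda>c. \<Sum>i\<in>K. cscale (c i) (u i))"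
    using CS SK cs.span_idx[OF finK] by simp
  have img: "(\<lambda>f. ?E h \<circ> ?E (id \<circ> f) \<circ> ?E b) ` C = ?E ` H_code q n k s \<eta>'"
  proof
    show "(\<lambda>f. ?E h \<circ> ?E (id \<circ> f) \<circ> ?E b) ` C \<subseteq> ?E ` H_code q n k s \<eta>'"
      unfolding Cspan Hspan using Tsum by auto
    show "?E ` H_code q n k s \<eta>' \<subseteq> (\<lambda>f. ?E h \<circ> ?E (id \<circ> f) \<circ> ?E b) ` C"
    proof
      fix y assume "y \<in> ?E ` H_code q n k s \<eta>'"
      then obtain d where y: "y = ?E (\<Sum>i\<in>K. cscale (d i) (w i))" unfolding Hspan by auto
      have dd: "\<And>i. ?Fr s (?Fr (- s) (d i)) = d i" by (rule L.Fr_inv)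
      have "?E h \<circ> ?E (id \<circ> (\<Sum>i\<in>K. cscale (?Fr (- s) (d i)) (u i))) \<circ> ?E b
          = ?E (\<Sum>i\<in>K. cscale (?Fr s (?Fr (- s) (d i))) (w i))" by (rule Tsum)
      also have "\<dots> = y" unfolding y dd ..
      finally have yy: "y = ?E h \<circ> ?E (id \<circ> (\<Sum>i\<in>K. cscale (?Fr (- s) (d i)) (u i))) \<circ> ?E b" by (rule sym)
      show "y \<in> (\<lambda>f. ?E h \<circ> ?E (id \<circ> f) \<circ> ?E b) ` C" unfolding Cspan
        by (rule image_eqI[where x="\<Sum>i\<in>K. cscale (?Fr (- s) (d i)) (u i)" and f="\<lambda>f. ?E h \<circ> ?E (id \<circ> f) \<circ> ?E b", OF yy]) (rule rangeI)
    qed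
  qed
  have "field_aut (id :: 'a \<Rightarrow> 'a)" unfolding field_aut_def by simp
  thus ?thesis unfolding code_equiv_def \<eta>'_def[symmetric] using h_inv b img by blast
qed

end
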